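(* Let $k\ge 2$, $\epsilon>0$, and let $\mathbf Q\in\mathcal D_{\epsilon,E}$ have output alphabet $\{1,\dots,L\}$. Then for every $j\in\{1,\dots,L\}$, $$\sum_{i=1}^k\frac{q_{ji}^2}{q_j^2}\ \le\ k\Big(1+(e^{\epsilon}-1)^2\frac{d^\ast(k-d^\ast)}{(d^\ast e^{\epsilon}+k-d^\ast)^2}\Big).$$
   Context: A mechanism $\mathbf Q$ with input alphabet $\{1,\dots,k\}$ and finite output alphabet $\{1,\dots,L\}$ is a conditional distribution $\mathbf Q(j\mid i)$; write $q_{ji}=\mathbf Q(j\mid i)$ and $q_j=\frac1k\sum_{i=1}^k q_{ji}$. $\mathcal D_{\epsilon,E}$ is the set of such finite-output mechanisms that are $\epsilon$-locally differentially private ($q_{ji}\le e^{\epsilon}q_{ji'}$ for all $j,i,i'$) and satisfy $q_{ji}/\min_{i'\in[k]}q_{ji'}\in\{1,e^{\epsilon}\}$ for all $j\in[L]$, $i\in[k]$. Let $d^\ast\in\arg\min_{1\le d\le k-1}\frac{(de^{\epsilon}+k-d)^2}{d(k-d)}$ (ties broken arbitrarily). *)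

theory Defs
  imports Complex_Main
begin

text \<open>A mechanism with input alphabet {1..k} and output alphabet {1..L}:
  Q j i is the probability of output j given input i.\<close>
definition mechanism :: "nat \<Rightarrow> nat \<Rightarrow> (nat \<Rightarrow> nat \<Rightarrow> real) \<Rightarrow> bool" where
  "mechanism k L Q \<longleftrightarrow>
     (\<forall>j\<in>{1..L}. \<forall>i\<in>{1..k}. 0 \<le> Q j i) \<and>
     (\<forall>i\<in>{1..k}. (\<Sum>j=1..L. Q j i) = 1)"

definition D_eps_E :: "real \<Rightarrow> nat \<Rightarrow> nat \<Rightarrow> (nat \<Rightarrow> nat \<Rightarrow> real) \<Rightarrow> bool" where
  "D_eps_E \<epsilon> k L Q \<longleftrightarrow>
     mechanism k L Q \<and>
     (\<forall>j\<in>{1..L}. \<forall>i\<in>{1..k}. \<forall>i'\<in>{1..k}. Q j i \<le> exp \<epsilon> * Q j i') \<and>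
     (\<forall>j\<in>{1..L}. \<forall>i\<in>{1..k}.
        Q j i / (MIN i'\<in>{1..k}. Q j i') \<in> {1, exp \<epsilon>})"

definition q_avg :: "nat \<Rightarrow> (nat \<Rightarrow> nat \<Rightarrow> real) \<Rightarrow> nat \<Rightarrow> real" where
  "q_avg k Q j = (1 / real k) * (\<Sum>i=1..k. Q j i)"

definition dstar_obj :: "real \<Rightarrow> nat \<Rightarrow> nat \<Rightarrow> real" where
  "dstar_obj \<epsilon> k d = (real d * exp \<epsilon> + real k - real d)^2 / (real d * (real k - real d))"

definition is_dstar :: "real \<Rightarrow> nat \<Rightarrow> nat \<Rightarrow> bool" where
  "is_dstar \<epsilon> k d \<longleftrightarrow> d \<in> {1..k-1} \<and> (\<forall>d'\<in>{1..k-1}. dstar_obj \<epsilon> k d \<le> dstar_obj \<epsilon> k d')"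

end

theory Submission
  imports Defs
begin

lemma key_ineq:
  fixes a kk tt dd :: real
  assumes a: "a > 1" and t0: "0 \<le> tt" and tk: "tt \<le> kk" and d1: "1 \<le> dd" and dk: "dd \<le> kk - 1"
    and tcase: "0 < tt \<and> tt < kk \<longrightarrow>
       (dd * a + kk - dd)^2 / (dd * (kk - dd)) \<le> (tt * a + kk - tt)^2 / (tt * (kk - tt))"
  shows "kk^2 * (tt * a^2 + (kk - tt)) / (tt * a + (kk - tt))^2
    \<le> kk * (1 + (a - 1)^2 * (dd * (kk - dd)) / (dd * a + kk - dd)^2)"
proof -
  have "tt * 1 \<le> tt * a" using a t0 by (intro mult_left_mono) auto
  then have Dpos: "tt * a + (kk - tt) > 0" using d1 dk by simp
  have "dd * 1 \<le> dd * a" using a d1 by (intro mult_left_mono) auto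
  then have "dd \<le> dd * a" by simp
  then have Epos: "dd * a + kk - dd > 0" using d1 dk by linarith
  have id: "kk * (tt * a^2 + (kk - tt)) = (tt * a + (kk - tt))^2 + (a-1)^2 * (tt * (kk - tt))"
    by (simp add: power2_eq_square algebra_simps)
  have lhs: "kk^2 * (tt * a^2 + (kk - tt)) / (tt * a + (kk - tt))^2
      = kk * (1 + (a-1)^2 * (tt * (kk - tt)) / (tt * a + (kk - tt))^2)"
  proof -
    have "kk^2 * (tt * a^2 + (kk - tt)) / (tt * a + (kk - tt))^2
       = kk * ((kk * (tt * a^2 + (kk - tt))) / (tt * a + (kk - tt))^2)" by (simp add: power2_eq_square)
    also have "\<dots> = kk * (((tt * a + (kk - tt))^2 + (a-1)^2 * (tt * (kk - tt))) / (tt * a + (kk - tt))^2)"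
      using id by simp
    also have "\<dots> = kk * (1 + (a-1)^2 * (tt * (kk - tt)) / (tt * a + (kk - tt))^2)"
      using Dpos by (simp add: add_divide_distrib)
    finally show ?thesis .
  qed
  have main: "(tt * (kk - tt)) / (tt * a + (kk - tt))^2 \<le> (dd * (kk - dd)) / (dd * a + kk - dd)^2"
  proof (cases "0 < tt \<and> tt < kk")
    case True
    then have h: "(dd * a + kk - dd)^2 / (dd * (kk - dd)) \<le> (tt * a + (kk - tt))^2 / (tt * (kk - tt))"
      using tcase by (simp add: algebra_simps)
    have p1: "(dd * a + kk - dd)^2 / (dd * (kk - dd)) > 0" using Epos d1 dk by simp
    have "1 / ((tt * a + (kk - tt))^2 / (tt * (kk - tt))) \<le> 1 / ((dd * a + kk - dd)^2 / (dd * (kk - dd)))"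
    proof -
      define x where "x = (dd * a + kk - dd)^2 / (dd * (kk - dd))"
      define y where "y = (tt * a + (kk - tt))^2 / (tt * (kk - tt))"
      have "x \<le> y" "0 < x" using h p1 unfolding x_def y_def by auto
      then have "0 < y * x" by (simp add: zero_less_mult_iff)
      from divide_left_mono[OF \<open>x \<le> y\<close> _ this, of 1] show "1 / y \<le> 1 / x" by simp
    qed
    then show ?thesis by simp
  next
    case False
    then have z: "tt * (kk - tt) = 0" using t0 tk by auto
    have "0 \<le> dd * (kk - dd) / (dd * a + kk - dd)^2" using d1 dk
      by (intro divide_nonneg_nonneg mult_nonneg_nonneg) auto
    then show ?thesis unfolding z by simp
  qed
  have "(a-1)^2 * (tt * (kk - tt)) / (tt * a + (kk - tt))^2 \<le> (a-1)^2 * (dd * (kk - dd)) / (dd * a + kk - dd)^2"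
    using main mult_left_mono[OF main, of "(a-1)^2"] by simp
  then show ?thesis unfolding lhs using tk t0 by (intro mult_left_mono) auto
qed

theorem lemma1:
  fixes k L d :: nat and \<epsilon> :: real and Q :: "nat \<Rightarrow> nat \<Rightarrow> real"
  assumes "k \<ge> 2" and "\<epsilon> > 0" and "D_eps_E \<epsilon> k L Q" and "is_dstar \<epsilon> k d"
    and "j \<in> {1..L}"
  shows "(\<Sum>i=1..k. (Q j i)^2 / (q_avg k Q j)^2)
    \<le> real k * (1 + (exp \<epsilon> - 1)^2 * (real d * (real k - real d)) / (real d * exp \<epsilon> + real k - real d)^2)"
proof -
  define a where "a = exp \<epsilon>"
  have a1: "a > 1" using assms(2) by (simp add: a_def)
  define m where "m = (MIN i\<in>{1..k}. Q j i)"
  have ne: "{1..k} \<noteq> {}" using assms(1) by simp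
  have nonneg: "\<And>i. i \<in> {1..k} \<Longrightarrow> 0 \<le> Q j i"
    using assms(3,5) unfolding D_eps_E_def mechanism_def by blast
  have ratio: "\<And>i. i \<in> {1..k} \<Longrightarrow> Q j i / m \<in> {1, a}"
    using assms(3,5) unfolding D_eps_E_def m_def a_def by blast
  have "m \<in> Q j ` {1..k}" unfolding m_def using ne by (intro Min_in) auto
  then obtain i0 where i0: "i0 \<in> {1..k}" "m = Q j i0" by auto
  have "m \<ge> 0" using i0 nonneg by simp
  moreover have "m \<noteq> 0" using ratio[OF i0(1)] a1 by auto
  ultimately have mpos: "m > 0" by simp
  have vals: "\<And>i. i \<in> {1..k} \<Longrightarrow> Q j i = m \<or> Q j i = m * a"
  proof -
    fix i assume "i \<in> {1..k}"
    from ratio[OF this] mpos show "Q j i = m \<or> Q j i = m * a"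
      by (auto simp: field_simps)
  qed
  define T where "T = {i\<in>{1..k}. Q j i = m * a}"
  define S where "S = {1..k} - T"
  have TS: "{1..k} = T \<union> S" "T \<inter> S = {}" "finite T" "finite S" unfolding S_def T_def by auto
  have QS: "\<And>i. i \<in> S \<Longrightarrow> Q j i = m" using vals unfolding S_def T_def by auto
  have QT: "\<And>i. i \<in> T \<Longrightarrow> Q j i = m * a" unfolding T_def by auto
  define t where "t = card T"
  have tk: "t \<le> k" unfolding t_def T_def
    by (metis (no_types, lifting) card_atLeastAtMost card_mono diff_Suc_1 finite_atLeastAtMost mem_Collect_eq subsetI)
  have cS: "card S = k - t" unfolding S_def t_def
    by (subst card_Diff_subset) (auto simp: T_def)
  have sum1: "(\<Sum>i=1..k. Q j i) = m * (real t * a + (real k - real t))"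
  proof -
    have "(\<Sum>i=1..k. Q j i) = (\<Sum>i\<in>T. Q j i) + (\<Sum>i\<in>S. Q j i)"
      using TS by (simp add: sum.union_disjoint)
    also have "\<dots> = real t * (m * a) + real (k - t) * m"
      using QS QT cS by (simp add: t_def)
    finally show ?thesis using tk by (simp add: algebra_simps of_nat_diff)
  qed
  have sum2: "(\<Sum>i=1..k. (Q j i)^2) = m^2 * (real t * a^2 + (real k - real t))"
  proof -
    have "(\<Sum>i=1..k. (Q j i)^2) = (\<Sum>i\<in>T. (Q j i)^2) + (\<Sum>i\<in>S. (Q j i)^2)"
      using TS by (simp add: sum.union_disjoint)
    also have "\<dots> = real t * (m * a)^2 + real (k - t) * m^2"
      using QS QT cS by (simp add: t_def)
    finally show ?thesis using tk by (simp add: algebra_simps of_nat_diff power_mult_distrib)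
  qed
  have qa: "q_avg k Q j = m * (real t * a + (real k - real t)) / real k"
    unfolding q_avg_def sum1 by simp
  have kpos: "real k > 0" using assms(1) by simp
  have "real t * 1 \<le> real t * a" using a1 by (intro mult_left_mono) auto
  then have Dpos: "real t * a + (real k - real t) > 0" using assms(1) tk by simp
  have "(\<Sum>i=1..k. (Q j i)^2 / (q_avg k Q j)^2) = (\<Sum>i=1..k. (Q j i)^2) / (q_avg k Q j)^2"
    by (simp add: sum_divide_distrib)
  also have "\<dots> = (real k)^2 * (real t * a^2 + (real k - real t)) / (real t * a + (real k - real t))^2"
    unfolding sum2 qa using mpos kpos Dpos by (simp add: power_divide power_mult_distrib)
  also have "\<dots> \<le> real k * (1 + (a - 1)^2 * (real d * (real k - real d)) / (real d * a + real k - real d)^2)"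
  proof (rule key_ineq[OF a1])
    show "0 \<le> real t" by simp
    show "real t \<le> real k" using tk by simp
    show "1 \<le> real d" using assms(4) unfolding is_dstar_def by auto
    show "real d \<le> real k - 1" using assms(4,1) unfolding is_dstar_def by auto
    show "0 < real t \<and> real t < real k \<longrightarrow>
       (real d * a + real k - real d)^2 / (real d * (real k - real d))
       \<le> (real t * a + real k - real t)^2 / (real t * (real k - real t))"
    proof
      assume h: "0 < real t \<and> real t < real k"
      then have "t \<in> {1..k-1}" by auto
      then show "(real d * a + real k - real d)^2 / (real d * (real k - real d))
       \<le> (real t * a + real k - real t)^2 / (real t * (real k - real t))"
        using assms(4) unfolding is_dstar_def dstar_obj_def a_def by blast
    qed
  qed
  finally show ?thesis unfolding a_def .
qed

end
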